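(* Let $n$ be an odd positive integer. There exists an ordering $w_0, w_1, \ldots, w_{2^n-3}$ of the set $\mathbb{Z}_2^n\setminus\{00\cdots0,\,11\cdots1\}$ in which every two consecutive words differ in exactly one bit position, and such that for every word $w$ in the set, the positions of $w$ and of its complement $\overline{w}$ in the ordering differ by exactly $2^{n-1}-1$.
   Context: For a binary word $w\in\mathbb{Z}_2^n$, its complement $\overline{w}$ is obtained by changing every $0$ to $1$ and every $1$ to $0$ (equivalently $\overline{w}=w+11\cdots1$). *)

theory Defs
  imports Main
begin

text \<open>Binary words of length n are represented as bool lists of length n.\<close>

definition complement :: "bool list \<Rightarrow> bool list" where
  "complement w = map Not w"

definition hamming :: "bool list \<Rightarrow> bool list \<Rightarrow> nat" where
  "hamming u v = card {i. i < length u \<and> u ! i \<noteq> v ! i}"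

end

theory Submission
  imports Defs
begin

fun adj :: "bool list \<Rightarrow> bool list \<Rightarrow> bool" where
  "adj (a # u) (b # v) = ((a \<noteq> b \<and> u = v) \<or> (a = b \<and> adj u v))"
| "adj _ _ = False"

lemma adj_sym: "adj u v \<Longrightarrow> adj v u"
  by (induction u v rule: adj.induct) auto

lemma adj_compl: "adj u v \<Longrightarrow> adj (complement u) (complement v)"
  by (induction u v rule: adj.induct) (auto simp: complement_def)

lemma adj_hamming: "adj u v \<Longrightarrow> hamming u v = 1"
proof (induction u v rule: adj.induct)
  case (1 a u b v)
  show ?case
  proof (cases "a = b")
    case True
    with 1 have h: "hamming u v = 1" by auto
    have "{i. i < length (a # u) \<and> (a # u) ! i \<noteq> (b # v) ! i}
          = Suc ` {i. i < length u \<and> u ! i \<noteq> v ! i}"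
      using True by (auto simp: image_def less_Suc_eq_0_disj)
    moreover have "card (Suc ` {i. i < length u \<and> u ! i \<noteq> v ! i}) = card {i. i < length u \<and> u ! i \<noteq> v ! i}"
      by (rule card_image) simp
    ultimately show ?thesis using h by (simp add: hamming_def)
  next
    case False
    with 1 have "u = v" by auto
    then have "{i. i < length (a # u) \<and> (a # u) ! i \<noteq> (b # v) ! i} = {0}"
      using False by (auto simp: nth_Cons')
    then show ?thesis by (simp add: hamming_def)
  qed
qed auto

definition Q :: "nat \<Rightarrow> bool list set" where "Q k = {w. length w = k}"

definition hpath :: "bool list list \<Rightarrow> bool list set \<Rightarrow> bool list \<Rightarrow> bool list \<Rightarrow> bool" where
  "hpath L S a b \<longleftrightarrow> distinct L \<and> set L = S \<and> L \<noteq> [] \<and> hd L = a \<and> last L = b \<and> successively adj L"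

fun flip0 :: "bool list \<Rightarrow> bool list" where
  "flip0 [] = []" | "flip0 (a # w) = (\<not> a) # w"

fun flip1 :: "bool list \<Rightarrow> bool list" where
  "flip1 (a # b # w) = a # (\<not> b) # w" | "flip1 w = w"

fun swap01 :: "bool list \<Rightarrow> bool list" where
  "swap01 (a # b # w) = b # a # w" | "swap01 w = w"

lemma Q_Suc: "Q (Suc k) = Cons True ` Q k \<union> Cons False ` Q k"
proof -
  have "w \<in> Cons True ` Q k \<union> Cons False ` Q k" if "length w = Suc k" for w
    using that by (cases w) (auto simp: Q_def image_def)
  then show ?thesis by (auto simp: Q_def)
qed

lemma gray0: "length c = k \<Longrightarrow> \<exists>L. hpath L (Q k) c (flip0 c)"
proof (induction k arbitrary: c)
  case 0
  then show ?case by (intro exI[of _ "[[]]"]) (auto simp: hpath_def Q_def)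
next
  case (Suc k)
  then obtain a c' where c: "c = a # c'" and lc: "length c' = k" by (cases c) auto
  from Suc.IH[OF lc] obtain L1 where h: "hpath L1 (Q k) c' (flip0 c')" by blast
  define L where "L = map (Cons a) L1 @ map (Cons (\<not> a)) (rev L1)"
  have ne: "L1 \<noteq> []" using h by (simp add: hpath_def)
  have "distinct L" using h by (auto simp: L_def hpath_def distinct_map)
  moreover have "set L = Q (Suc k)"
    using h by (cases a) (auto simp: L_def hpath_def Q_Suc)
  moreover have "hd L = c" using h ne by (simp add: L_def hpath_def c hd_map)
  moreover have "last L = flip0 c" using h ne by (simp add: L_def hpath_def c last_map hd_rev last_rev)
  moreover have "successively adj L"
    using h ne by (auto simp: L_def hpath_def successively_append_iff successively_map last_map hd_rev hd_map
        intro: successively_mono adj_sym)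
  moreover have "L \<noteq> []" using ne by (simp add: L_def)
  ultimately show ?case unfolding hpath_def by blast
qed

lemma swap_swap[simp]: "swap01 (swap01 w) = w"
  by (cases w rule: swap01.cases) auto

lemma length_swap[simp]: "length (swap01 w) = length w"
  by (cases w rule: swap01.cases) auto

lemma adj_swap: "adj u v \<Longrightarrow> adj (swap01 u) (swap01 v)"
  by (cases u rule: swap01.cases; cases v rule: swap01.cases) auto

lemma swap_image: "swap01 ` Q k = Q k"
proof
  show "swap01 ` Q k \<subseteq> Q k" by (auto simp: Q_def)
  show "Q k \<subseteq> swap01 ` Q k"
  proof
    fix x assume "x \<in> Q k"
    then have "swap01 x \<in> Q k" "x = swap01 (swap01 x)" by (auto simp: Q_def)
    then show "x \<in> swap01 ` Q k" by blast
  qed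
qed

lemma gray1:
  assumes "length c = k" "k \<ge> 2"
  shows "\<exists>L. hpath L (Q k) c (flip1 c)"
proof -
  obtain a b w where c: "c = a # b # w" using assms
    by (cases c rule: swap01.cases) auto
  obtain L0 where h: "hpath L0 (Q k) (swap01 c) (flip0 (swap01 c))"
    using gray0[of "swap01 c" k] assms by auto
  have "inj swap01" by (metis injI swap_swap)
  then have "hpath (map swap01 L0) (Q k) c (flip1 c)"
    using h unfolding hpath_def
    by (auto simp: distinct_map swap_image hd_map last_map c successively_map
        intro: successively_mono adj_swap inj_on_subset)
  then show ?thesis by blast
qed

definition Z :: "nat \<Rightarrow> bool list" where "Z k = replicate k False"

lemma Q0: "Q 0 = {[]}" by (auto simp: Q_def)

lemma Z_Suc: "Z (Suc k) = False # Z k" by (simp add: Z_def)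

lemma Q_Suc_minus: "Q (Suc k) - {Z (Suc k)} = Cons True ` Q k \<union> Cons False ` (Q k - {Z k})"
  by (auto simp: Q_Suc Z_Suc)

lemma baseA: "\<exists>L u. hpath L (Q 2 - {Z 2}) u (complement u)"
proof -
  have "Q 2 - {Z 2} = set [[False,True],[True,True],[True,False]]"
    by (auto simp: numeral_2_eq_2 Q_Suc_minus Q_Suc Q0 Z_def)
  then have "hpath [[False,True],[True,True],[True,False]] (Q 2 - {Z 2}) [False,True] (complement [False,True])"
    by (simp add: hpath_def complement_def)
  then show ?thesis by blast
qed

lemma flip0_compl: "flip0 (complement w) = complement (flip0 w)"
  by (cases w) (auto simp: complement_def)

lemma flip0_flip0[simp]: "flip0 (flip0 w) = w"
  by (cases w) auto

lemma flip1_flip1[simp]: "flip1 (flip1 w) = w"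
  by (cases w rule: flip1.cases) auto

lemma compl_compl[simp]: "complement (complement w) = w"
  by (induct w) (auto simp: complement_def)

lemma compl_Cons[simp]: "complement (a # w) = (\<not> a) # complement w"
  by (simp add: complement_def)

lemma stepB:
  assumes h: "hpath L1 (Q j - {Z j}) u (complement u)" and j: "j \<ge> 1"
  shows "\<exists>L x. hpath L (Q (Suc j) - {Z (Suc j)}) x (flip1 (complement x))"
proof -
  have "u \<in> set L1" using h unfolding hpath_def by (metis hd_in_set)
  then have lu: "length u = j" using h by (auto simp: hpath_def Q_def)
  then obtain G where g: "hpath G (Q j) (flip0 u) (flip0 (flip0 u))"
    using gray0[of "flip0 u" j] by (cases u) auto
  define L where "L = map (Cons True) G @ map (Cons False) L1"
  have "distinct L" using h g by (auto simp: L_def hpath_def distinct_map)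
  moreover have "set L = Q (Suc j) - {Z (Suc j)}"
    using h g by (simp add: L_def hpath_def Q_Suc_minus Un_commute)
  moreover have "L \<noteq> []" using g by (simp add: L_def hpath_def)
  moreover have "hd L = True # flip0 u" using g by (simp add: L_def hpath_def hd_map)
  moreover have "last L = flip1 (complement (True # flip0 u))"
    using h lu j by (cases u) (auto simp: L_def hpath_def last_map)
  moreover have "successively adj L"
    using h g by (simp add: L_def hpath_def successively_append_iff successively_map last_map hd_map)
  ultimately have "hpath L (Q (Suc j) - {Z (Suc j)}) (True # flip0 u) (flip1 (complement (True # flip0 u)))"
    unfolding hpath_def by blast
  then show ?thesis by blast
qed

lemma stepA:
  assumes h: "hpath L1 (Q k - {Z k}) x (flip1 (complement x))" and k: "k \<ge> 2"
  shows "\<exists>L u. hpath L (Q (Suc k) - {Z (Suc k)}) u (complement u)"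
proof -
  have "x \<in> set L1" using h unfolding hpath_def by (metis hd_in_set)
  then have lx: "length x = k" using h by (auto simp: hpath_def Q_def)
  define b where "b = flip1 (complement x)"
  have lb: "length b = k" using lx
    by (cases x rule: flip1.cases) (auto simp: b_def complement_def)
  obtain G where g: "hpath G (Q k) b (flip1 b)"
    using gray1[OF lb k] by blast
  define L where "L = map (Cons False) L1 @ map (Cons True) G"
  have "distinct L" using h g by (auto simp: L_def hpath_def distinct_map)
  moreover have "set L = Q (Suc k) - {Z (Suc k)}"
    using h g by (simp add: L_def hpath_def Q_Suc_minus Un_commute)
  moreover have "L \<noteq> []" using g by (simp add: L_def hpath_def)
  moreover have "hd L = False # x" using h by (simp add: L_def hpath_def hd_map)
  moreover have "last L = complement (False # x)"
    using g by (auto simp: L_def hpath_def last_map b_def)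
  moreover have "successively adj L"
    using h g by (simp add: L_def hpath_def successively_append_iff successively_map last_map hd_map b_def)
  ultimately have "hpath L (Q (Suc k) - {Z (Suc k)}) (False # x) (complement (False # x))"
    unfolding hpath_def by blast
  then show ?thesis by blast
qed

lemma allA: "\<exists>L u. hpath L (Q (2 * i + 2) - {Z (2 * i + 2)}) u (complement u)"
proof (induction i)
  case 0
  then show ?case using baseA by (simp add: numeral_2_eq_2)
next
  case (Suc i)
  then obtain L u where "hpath L (Q (2 * i + 2) - {Z (2 * i + 2)}) u (complement u)" by blast
  from stepB[OF this] obtain L' x where "hpath L' (Q (Suc (2 * i + 2)) - {Z (Suc (2 * i + 2))}) x (flip1 (complement x))"
    by auto
  from stepA[OF this] show ?case by simp
qed

lemma finite_card_Q: "finite (Q k) \<and> card (Q k) = 2 ^ k"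
proof (induction k)
  case 0 then show ?case by (simp add: Q0)
next
  case (Suc k)
  have d: "Cons True ` Q k \<inter> Cons False ` Q k = {}" by auto
  have "card (Cons True ` Q k \<union> Cons False ` Q k) = card (Cons True ` Q k) + card (Cons False ` Q k)"
    using Suc d by (intro card_Un_disjoint) auto
  also have "\<dots> = 2 ^ Suc k" using Suc by (simp add: card_image)
  finally show ?case using Suc by (simp add: Q_Suc)
qed

lemma compl_inj: "complement u = complement v \<Longrightarrow> u = v"
  by (metis compl_compl)

lemma compl_eq_iff[simp]: "complement u = complement v \<longleftrightarrow> u = v"
  by (metis compl_compl)

lemma length_compl[simp]: "length (complement w) = length w"
  by (simp add: complement_def)

lemma compl_Z: "complement (Z k) = replicate k True"
  by (simp add: complement_def Z_def)

theorem theorem1: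
  fixes n :: nat
  assumes "odd n"
  shows "\<exists>ws :: bool list list.
     distinct ws \<and>
     set ws = {w. length w = n} - {replicate n False, replicate n True} \<and>
     (\<forall>i. Suc i < length ws \<longrightarrow> hamming (ws ! i) (ws ! Suc i) = 1) \<and>
     (\<forall>i j. i < length ws \<and> j < length ws \<and> ws ! j = complement (ws ! i) \<longrightarrow>
        \<bar>int i - int j\<bar> = 2 ^ (n - 1) - 1)"
proof (cases "n = 1")
  case True
  have "{w :: bool list. length w = 1} \<subseteq> {[False], [True]}"
  proof
    fix w :: "bool list" assume "w \<in> {w. length w = 1}"
    then obtain a where "w = [a]" by (auto simp: length_Suc_conv)
    then show "w \<in> {[False], [True]}" by (cases a) auto
  qed
  then have "{w :: bool list. length w = n} - {replicate n False, replicate n True} = {}"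
    using True by auto
  then show ?thesis by (intro exI[of _ "[]"]) simp
next
  case False
  from assms obtain k where k: "n = 2 * k + 1" using oddE by blast
  with False have k1: "k \<ge> 1" by auto
  define i where "i = k - 1"
  have n: "n = Suc (2 * i + 2)" using k k1 i_def by simp
  define m where "m = 2 * i + 2"
  have nm: "n = Suc m" using n m_def by simp
  obtain L1 u where h: "hpath L1 (Q m - {Z m}) u (complement u)"
    using allA[of i] m_def by blast
  have ne: "L1 \<noteq> []" and dL1: "distinct L1" and sL1: "set L1 = Q m - {Z m}"
    and hdL: "hd L1 = u" and lastL: "last L1 = complement u" and sucL: "successively adj L1"
    using h by (auto simp: hpath_def)
  have lenL1: "length L1 = 2 ^ m - 1"
  proof -
    have "Z m \<in> Q m" by (simp add: Z_def Q_def)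
    then have "card (Q m - {Z m}) = 2 ^ m - 1" using finite_card_Q[of m] by simp
    then show ?thesis using sL1 dL1 distinct_card by metis
  qed
  define H where "H = map (Cons False) L1"
  define ws where "ws = H @ map complement H"
  have dH: "distinct H" using dL1 by (simp add: H_def distinct_map)
  have injc: "inj complement" by (metis injI compl_inj)
  have "distinct ws"
    using dH by (auto simp: ws_def H_def distinct_map inj_on_def)
  moreover have "set ws = {w. length w = n} - {replicate n False, replicate n True}"
  proof
    show "set ws \<subseteq> {w. length w = n} - {replicate n False, replicate n True}"
    proof
      fix w assume "w \<in> set ws"
      then obtain x where x: "x \<in> set L1" and wx: "w = False # x \<or> w = True # complement x"
        by (auto simp: ws_def H_def)
      have lx: "length x = m" and xZ: "x \<noteq> Z m" using x sL1 by (auto simp: Q_def)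
      have rF: "replicate n False = False # Z m" by (simp add: nm Z_def)
      have rT: "replicate n True = True # complement (Z m)" by (simp add: nm compl_Z)
      show "w \<in> {w. length w = n} - {replicate n False, replicate n True}"
        using wx lx xZ unfolding rF rT by (auto simp: nm)
    qed
    show "{w. length w = n} - {replicate n False, replicate n True} \<subseteq> set ws"
    proof
      fix w assume w: "w \<in> {w. length w = n} - {replicate n False, replicate n True}"
      then obtain a v where wv: "w = a # v" and lv: "length v = m" using nm
        by (auto simp: length_Suc_conv)
      show "w \<in> set ws"
      proof (cases a)
        case True
        have "complement v \<noteq> Z m"
        proof
          assume "complement v = Z m"
          then have "v = replicate m True" by (metis compl_Z compl_compl)
          then have "w = replicate n True" using wv True by (simp add: nm)
          then show False using w by simp
        qed
        then have "complement v \<in> set L1" using sL1 lv by (simp add: Q_def)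
        then have "True # v \<in> set ws"
          using rev_image_eqI[of "complement v" "set L1" "True # v" "\<lambda>x. True # complement x"]
          by (simp add: ws_def H_def)
        then show ?thesis using True wv by simp
      next
        case False
        have "v \<noteq> Z m" using w wv False by (auto simp: nm Z_def)
        then have "v \<in> set L1" using sL1 lv by (simp add: Q_def)
        then show ?thesis using False wv by (simp add: ws_def H_def)
      qed
    qed
  qed
  moreover have "successively adj ws"
  proof -
    have "successively adj H" using sucL by (simp add: H_def successively_map)
    moreover have "successively adj (map complement H)"
      using \<open>successively adj H\<close> by (auto simp: successively_map intro: successively_mono adj_compl)
    moreover have "adj (last H) (hd (map complement H))"
      using ne hdL lastL by (simp add: H_def last_map hd_map)
    ultimately show ?thesis using ne by (simp add: ws_def successively_append_iff H_def)
  qed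
  then have "\<forall>k. Suc k < length ws \<longrightarrow> hamming (ws ! k) (ws ! Suc k) = 1"
    using adj_hamming successively_nth by blast
  moreover have "\<forall>i j. i < length ws \<and> j < length ws \<and> ws ! j = complement (ws ! i) \<longrightarrow>
        \<bar>int i - int j\<bar> = 2 ^ (n - 1) - 1"
  proof (intro allI impI)
    fix i j assume a: "i < length ws \<and> j < length ws \<and> ws ! j = complement (ws ! i)"
    define N where "N = length H"
    have lws: "length ws = 2 * N" by (simp add: ws_def N_def)
    have N: "int N = 2 ^ (n - 1) - 1" using lenL1 nm
      by (simp add: N_def H_def of_nat_diff)
    have nth1: "k < N \<Longrightarrow> ws ! k = H ! k" for k by (simp add: ws_def N_def nth_append)
    have nth2: "N \<le> k \<Longrightarrow> k < 2 * N \<Longrightarrow> ws ! k = complement (H ! (k - N))" for k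
      by (simp add: ws_def N_def nth_append)
    have hdH: "k < N \<Longrightarrow> H ! k = False # L1 ! k" for k by (simp add: H_def N_def)
    have eqi: "k < N \<Longrightarrow> l < N \<Longrightarrow> H ! k = H ! l \<Longrightarrow> k = l" for k l
      using dH by (simp add: N_def nth_eq_iff_index_eq)
    show "\<bar>int i - int j\<bar> = 2 ^ (n - 1) - 1"
    proof (cases "i < N")
      case True
      show ?thesis
      proof (cases "j < N")
        case True
        then show ?thesis using a nth1 hdH \<open>i < N\<close> by simp
      next
        case False
        then have "H ! (j - N) = H ! i" using a nth1 nth2 True lws
          by (metis compl_inj not_less)
        moreover have "j - N < N" using False a lws by linarith
        ultimately have "j - N = i" using eqi[of "j - N" i] True by blast
        then show ?thesis using N False by simp
      qed
    next
      case False
      show ?thesis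
      proof (cases "j < N")
        case True
        then have "H ! j = H ! (i - N)" using a nth1 nth2 False lws
          by (metis compl_compl not_less)
        moreover have "i - N < N" using False a lws by linarith
        ultimately have "j = i - N" using eqi[of j "i - N"] True by blast
        then show ?thesis using N False by simp
      next
        case False
        then show ?thesis using a nth2 hdH \<open>\<not> i < N\<close> lws by (metis compl_Cons compl_compl list.inject not_less diff_less_mono le_add_diff_inverse mult_2 add_less_cancel_left)
      qed
    qed
  qed
  ultimately show ?thesis by blast
qed

end
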